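(* Let $F$ be an infinite field of characteristic $p>2$, let $k$ be a positive integer and $n\in\mathbb{N}$. Then the polynomial $t_{2n}=[z_1,z_2][z_3,z_4]\cdots[z_{2n-1},z_{2n}]$, where all $z_j$ are variables of degree $0$, is not a $\mathbb{Z}$-graded identity of $E^{k^\ast}$.
   Context: $L$ is a vector space over $F$ with basis $e_1,e_2,\dots$, $E$ its unital Grassmann algebra (basis $1$ and $e_{i_1}\cdots e_{i_k}$, $i_1<\cdots<i_k$, with $e_ie_j=-e_je_i$). $E^{k^\ast}$ is $E$ with the $\mathbb{Z}$-grading induced by $\|e_i\|=1$ for $i\le k$, $\|e_i\|=0$ for $i>k$ (basis monomials get the sum of degrees of their factors; $1$ has degree $0$). A graded polynomial is a graded identity of $A$ if it vanishes whenever each variable is replaced by an element of the homogeneous component of $A$ of that variable's degree. $[a,b]=ab-ba$. *)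

theory Defs
  imports Main
begin

text \<open>An element is represented by its coefficient function on basis monomials;
  the monomial e_{i_1}...e_{i_m} (i_1 < ... < i_m) is represented by the finite
  set {i_1,...,i_m} of positive naturals, and 1 by the empty set.\<close>

definition grass :: "(nat set \<Rightarrow> 'a::field) set" where
  "grass = {f. finite {S. f S \<noteq> 0} \<and> (\<forall>S. f S \<noteq> 0 \<longrightarrow> finite S \<and> 0 \<notin> S)}"

text \<open>Sign of e_A e_B = sign * e_(A \<union> B) for disjoint A, B: parity of inversions.\<close>
definition gsign :: "nat set \<Rightarrow> nat set \<Rightarrow> 'a::ring_1" where
  "gsign A B = (-1) ^ card {(a, b). a \<in> A \<and> b \<in> B \<and> b < a}"

definition gmult :: "(nat set \<Rightarrow> 'a::field) \<Rightarrow> (nat set \<Rightarrow> 'a) \<Rightarrow> (nat set \<Rightarrow> 'a)" where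
  "gmult f g = (\<lambda>S. if finite S then (\<Sum>A\<in>Pow S. gsign A (S - A) * f A * g (S - A)) else 0)"

definition gone :: "nat set \<Rightarrow> 'a::field" where
  "gone = (\<lambda>S. if S = {} then 1 else 0)"

definition gcomm :: "(nat set \<Rightarrow> 'a::field) \<Rightarrow> (nat set \<Rightarrow> 'a) \<Rightarrow> (nat set \<Rightarrow> 'a)" where
  "gcomm a b = (\<lambda>S. gmult a b S - gmult b a S)"

text \<open>Homogeneous component of degree d of E^{k*} (deg e_i = 1 for i \<le> k, 0 otherwise):
  spanned by monomials with exactly d generators of index in {1..k}.\<close>
definition gcomp :: "nat \<Rightarrow> int \<Rightarrow> (nat set \<Rightarrow> 'a::field) set" where
  "gcomp k d = {f \<in> grass. \<forall>S. f S \<noteq> 0 \<longrightarrow> int (card (S \<inter> {1..k})) = d}"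

text \<open>Evaluation of t_{2n} = [z_1,z_2][z_3,z_4]...[z_{2n-1},z_{2n}] (variables indexed from 0 here).\<close>
fun tpoly :: "(nat \<Rightarrow> (nat set \<Rightarrow> 'a::field)) \<Rightarrow> nat \<Rightarrow> (nat set \<Rightarrow> 'a)" where
  "tpoly z 0 = gone"
| "tpoly z (Suc n) = gmult (tpoly z n) (gcomm (z (2 * n)) (z (2 * n + 1)))"

end

theory Submission
  imports Defs
begin

definition mon :: "nat set \<Rightarrow> 'a::field \<Rightarrow> nat set \<Rightarrow> 'a" where
  "mon A c = (\<lambda>T. if T = A then c else 0)"

lemma gmult_mon:
  assumes "finite A" "finite B" "A \<inter> B = {}"
  shows "gmult (mon A c) (mon B d) = mon (A \<union> B) (gsign A B * c * d)"
proof (rule ext)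
  fix S :: "nat set"
  show "gmult (mon A c) (mon B d) S = mon (A \<union> B) (gsign A B * c * d) S"
  proof (cases "finite S")
    case False
    then have "S \<noteq> A \<union> B" using assms by auto
    then show ?thesis using False by (simp add: gmult_def mon_def)
  next
    case True
    have "gmult (mon A c) (mon B d) S =
      (\<Sum>A'\<in>Pow S. if A' = A then (if S = A \<union> B then gsign A B * c * d else 0) else 0)"
    proof -
      have "gmult (mon A c) (mon B d) S = (\<Sum>A'\<in>Pow S. gsign A' (S - A') * mon A c A' * mon B d (S - A'))"
        using True by (simp add: gmult_def)
      also have "\<dots> = (\<Sum>A'\<in>Pow S. if A' = A then (if S = A \<union> B then gsign A B * c * d else 0) else 0)"
        using assms by (intro sum.cong) (auto simp: mon_def)
      finally show ?thesis .
    qed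
    also have "\<dots> = (if A \<in> Pow S then (if S = A \<union> B then gsign A B * c * d else 0) else 0)"
      using True by (subst sum.delta) auto
    also have "\<dots> = mon (A \<union> B) (gsign A B * c * d) S"
      by (auto simp: mon_def)
    finally show ?thesis .
  qed
qed

lemma gsign_less:
  assumes "\<forall>a\<in>A. \<forall>b\<in>B. a < b"
  shows "gsign A B = 1"
proof -
  have eq: "{(a, b). a \<in> A \<and> b \<in> B \<and> b < a} = {}" using assms by fastforce
  show ?thesis unfolding gsign_def eq by simp
qed

lemma gsign_gt:
  assumes "(a::nat) < b"
  shows "gsign {b} {a} = -1"
proof -
  have "{(x, y). x \<in> {b} \<and> y \<in> {a} \<and> y < x} = {(b,a)}" using assms by auto
  then show ?thesis by (simp add: gsign_def)
qed

lemma gcomm_mon: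
  assumes "(a::nat) < b"
  shows "gcomm (mon {a} (1::'a::field)) (mon {b} 1) = mon {a, b} 2"
proof -
  have 1: "gmult (mon {a} (1::'a)) (mon {b} 1) = mon {a,b} 1"
  proof -
    have "{a} \<union> {b} = {a,b}" by auto
    then show ?thesis using assms by (simp add: gmult_mon gsign_less)
  qed
  have 2: "gmult (mon {b} (1::'a)) (mon {a} 1) = mon {a,b} (-1)"
  proof -
    have "{b} \<union> {a} = {a,b}" by auto
    then show ?thesis using assms by (simp add: gmult_mon gsign_gt)
  qed
  show ?thesis unfolding gcomm_def 1 2 by (auto simp: mon_def)
qed

definition zz :: "nat \<Rightarrow> nat \<Rightarrow> nat set \<Rightarrow> 'a::field" where
  "zz k j = mon {k + 1 + j} 1"

lemma tpoly_zz:
  "tpoly (zz k :: nat \<Rightarrow> nat set \<Rightarrow> 'a::field) n = mon {k+1..<k+1+2*n} (2 ^ n)"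
proof (induction n)
  case 0
  then show ?case by (simp add: gone_def mon_def fun_eq_iff)
next
  case (Suc n)
  have c: "gcomm (zz k (2 * n)) (zz k (2 * n + 1)) = mon {k+1+2*n, k+1+(2*n+1)} (2::'a)"
    unfolding zz_def by (rule gcomm_mon) simp
  have u: "{k+1..<k+1+2*n} \<union> {k+1+2*n, k+1+(2*n+1)} = {k+1..<k+1+2*Suc n}" by auto
  have g: "gsign {k+1..<k+1+2*n} {k+1+2*n, k+1+(2*n+1)} = (1::'a)"
    by (rule gsign_less) auto
  have "tpoly (zz k :: nat \<Rightarrow> nat set \<Rightarrow> 'a) (Suc n) =
     gmult (mon {k+1..<k+1+2*n} (2 ^ n)) (mon {k+1+2*n, k+1+(2*n+1)} (2::'a))"
    using Suc c by simp
  also have "\<dots> = mon {k+1..<k+1+2*Suc n} (2 ^ Suc n)"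
    by (subst gmult_mon) (use g u in \<open>auto simp: mult.commute\<close>)
  finally show ?case .
qed

lemma zz_comp: "zz k j \<in> gcomp k 0"
proof -
  have "{S. zz k j S \<noteq> (0::'a)} = {{k+1+j}}" by (auto simp: zz_def mon_def)
  then show ?thesis
    by (auto simp: gcomp_def grass_def zz_def mon_def)
qed

theorem mainTheorem6:
  fixes k n :: nat
  assumes "infinite (UNIV :: 'a::field set)"
    and "CHAR('a) > 2"
    and "k > 0"
  shows "\<exists>z :: nat \<Rightarrow> (nat set \<Rightarrow> 'a). (\<forall>j < 2 * n. z j \<in> gcomp k 0) \<and> tpoly z n \<noteq> (\<lambda>_. 0)"
proof (intro exI conjI allI impI)
  show "zz k j \<in> gcomp k 0" for j by (rule zz_comp)
  have two: "(2::'a) \<noteq> 0"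
  proof
    assume "(2::'a) = 0"
    then have "of_nat 2 = (0::'a)" by simp
    then have "CHAR('a) dvd 2" by (simp only: of_nat_eq_0_iff_char_dvd)
    then show False using assms(2) by (auto dest: dvd_imp_le)
  qed
  have "tpoly (zz k :: nat \<Rightarrow> nat set \<Rightarrow> 'a) n {k+1..<k+1+2*n} = 2 ^ n"
    by (simp add: tpoly_zz mon_def)
  then show "tpoly (zz k :: nat \<Rightarrow> nat set \<Rightarrow> 'a) n \<noteq> (\<lambda>_. 0)"
    using two by auto
qed

end
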